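(* For any integers $n>m\ge1$, there is no algorithm for SSP (on instances with $n$ jobs and $m$ machines) that is $1$-consistent and $\frac{n-m+1}{\lceil n/m\rceil}$-robust, even in the case where all jobs have equal processing times. In particular, for $m=n/2$, there is no algorithm that is $1$-consistent and $o(n)$-robust.
   Context: Scheduling with Speed Predictions (SSP). An instance consists of $n$ jobs with processing times $p_1,\dots,p_n\ge 0$ and $m$ machines with true speeds $s_1,\dots,s_m>0$; processing job $j$ on machine $i$ takes time $p_j/s_i$. In the partitioning stage the algorithm receives $\mathbf p$ and predicted speeds $\hat{\mathbf s}\ge 0$ (not $\mathbf s$) and partitions the jobs into $m$ possibly empty bags. In the scheduling stage $\mathbf s$ is revealed and each bag is assigned whole to a machine; the makespan is the maximum over machines $i$ of (total processing time assigned to $i$)$/s_i$. $opt(\mathbf p,\mathbf s)$ is the minimum makespan of assigning individual jobs knowing $\mathbf s$; $alg(\mathbf p,\hat{\mathbf s},\mathbf s)$ is the algorithm's makespan. An algorithm is $c$-consistent if $alg(\mathbf p,\mathbf s,\mathbf s)\le c\cdot opt(\mathbf p,\mathbf s)$ for all $\mathbf p,\mathbf s$, and $\beta$-robust if $alg(\mathbf p,\hat{\mathbf s},\mathbf s)\le \beta\cdot opt(\mathbf p,\mathbf s)$ for all $\mathbf p,\hat{\mathbf s},\mathbf s$. *)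

theory Defs
  imports Complex_Main "HOL-Library.FuncSet"
begin

text \<open>Jobs are indexed by 0..<n, machines by 0..<m. Processing times and
(true/predicted) speeds are functions nat => real; only indices below n resp. m matter (other values are ignored).\<close>

definition makespan :: "nat \<Rightarrow> nat \<Rightarrow> (nat \<Rightarrow> real) \<Rightarrow> (nat \<Rightarrow> real) \<Rightarrow> (nat \<Rightarrow> nat) \<Rightarrow> real" where
  "makespan n m p s f = Max ((\<lambda>i. (\<Sum>j\<in>{j. j < n \<and> f j = i}. p j) / s i) ` {..<m})"

definition opt :: "nat \<Rightarrow> nat \<Rightarrow> (nat \<Rightarrow> real) \<Rightarrow> (nat \<Rightarrow> real) \<Rightarrow> real" where
  "opt n m p s = Min (makespan n m p s ` ({..<n} \<rightarrow>\<^sub>E {..<m}))"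

text \<open>An algorithm is a pair (part, assign): part p shat gives for every job its bag
(bags are 0..<m); assign p shat s gives for every bag the machine it is placed on.\<close>
definition valid_alg :: "nat \<Rightarrow> nat \<Rightarrow>
    ((nat \<Rightarrow> real) \<Rightarrow> (nat \<Rightarrow> real) \<Rightarrow> nat \<Rightarrow> nat) \<Rightarrow>
    ((nat \<Rightarrow> real) \<Rightarrow> (nat \<Rightarrow> real) \<Rightarrow> (nat \<Rightarrow> real) \<Rightarrow> nat \<Rightarrow> nat) \<Rightarrow> bool" where
  "valid_alg n m part assign \<longleftrightarrow>
     (\<forall>p shat. \<forall>j<n. part p shat j < m) \<and>
     (\<forall>p shat s. \<forall>b<m. assign p shat s b < m)"

definition alg :: "nat \<Rightarrow> nat \<Rightarrow>
    ((nat \<Rightarrow> real) \<Rightarrow> (nat \<Rightarrow> real) \<Rightarrow> nat \<Rightarrow> nat) \<Rightarrow>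
    ((nat \<Rightarrow> real) \<Rightarrow> (nat \<Rightarrow> real) \<Rightarrow> (nat \<Rightarrow> real) \<Rightarrow> nat \<Rightarrow> nat) \<Rightarrow>
    (nat \<Rightarrow> real) \<Rightarrow> (nat \<Rightarrow> real) \<Rightarrow> (nat \<Rightarrow> real) \<Rightarrow> real" where
  "alg n m part assign p shat s = makespan n m p s (\<lambda>j. assign p shat s (part p shat j))"

definition equal_jobs :: "nat \<Rightarrow> (nat \<Rightarrow> real) \<Rightarrow> bool" where
  "equal_jobs n p \<longleftrightarrow> (\<exists>c\<ge>0. \<forall>j<n. p j = c)"

definition pos_speeds :: "nat \<Rightarrow> (nat \<Rightarrow> real) \<Rightarrow> bool" where
  "pos_speeds m s \<longleftrightarrow> (\<forall>i<m. s i > 0)"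

definition nonneg_speeds :: "nat \<Rightarrow> (nat \<Rightarrow> real) \<Rightarrow> bool" where
  "nonneg_speeds m s \<longleftrightarrow> (\<forall>i<m. s i \<ge> 0)"

definition consistent_eq where
  "consistent_eq n m part assign c \<longleftrightarrow>
     (\<forall>p s. equal_jobs n p \<longrightarrow> pos_speeds m s \<longrightarrow>
        alg n m part assign p s s \<le> c * opt n m p s)"

definition robust_eq where
  "robust_eq n m part assign \<beta> \<longleftrightarrow>
     (\<forall>p shat s. equal_jobs n p \<longrightarrow> nonneg_speeds m shat \<longrightarrow> pos_speeds m s \<longrightarrow>
        alg n m part assign p shat s \<le> \<beta> * opt n m p s)"

end

theory Submission
  imports Defs
begin

lemma makespan_le:
  assumes "1 \<le> m" "\<And>i. i < m \<Longrightarrow> (\<Sum>j\<in>{j. j < n \<and> f j = i}. p j) / s i \<le> c"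
  shows "makespan n m p s f \<le> c"
  unfolding makespan_def using assms by (subst Max_le_iff) (auto simp: lessThan_empty_iff)

lemma makespan_ge:
  assumes "i < m"
  shows "(\<Sum>j\<in>{j. j < n \<and> f j = i}. p j) / s i \<le> makespan n m p s f"
  unfolding makespan_def using assms by (intro Max_ge) auto

lemma opt_le:
  assumes "f \<in> {..<n} \<rightarrow>\<^sub>E {..<m}"
  shows "opt n m p s \<le> makespan n m p s f"
  unfolding opt_def using assms by (intro Min_le) (auto intro: finite_PiE)

lemma opt_nonneg:
  assumes "1 \<le> m" "\<And>j. p j \<ge> 0" "\<And>i. s i > 0"
  shows "0 \<le> opt n m p s"
proof -
  have ne: "{..<n} \<rightarrow>\<^sub>E {..<m} \<noteq> {}" using assms(1) by (auto simp: PiE_eq_empty_iff lessThan_empty_iff)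
  have "opt n m p s \<in> makespan n m p s ` ({..<n} \<rightarrow>\<^sub>E {..<m})"
    unfolding opt_def using ne by (intro Min_in) (auto intro: finite_PiE)
  then obtain f where "opt n m p s = makespan n m p s f" by auto
  moreover have "0 \<le> (\<Sum>j\<in>{j. j < n \<and> f j = 0}. p j) / s 0"
    using assms by (intro divide_nonneg_pos sum_nonneg) auto
  ultimately show ?thesis using makespan_ge[where i=0 and m=m and n=n and f=f and p=p and s=s] assms(1) by linarith
qed

lemma sum_one: "(\<Sum>j\<in>A. (1::real)) = real (card A)" by simp

theorem proposition1:
  fixes n m :: nat and \<beta> :: real
  assumes "1 \<le> m" and "m < n"
    and "\<beta> < real (n - m + 1) / real_of_int \<lceil>real n / real m\<rceil>"
  shows "\<not> (\<exists>part assign. valid_alg n m part assign \<and>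
              consistent_eq n m part assign 1 \<and>
              robust_eq n m part assign \<beta>)"
proof
  assume "\<exists>part assign. valid_alg n m part assign \<and>
              consistent_eq n m part assign 1 \<and>
              robust_eq n m part assign \<beta>"
  then obtain part assign where va: "valid_alg n m part assign"
    and co: "consistent_eq n m part assign 1" and ro: "robust_eq n m part assign \<beta>" by blast
  define p :: "nat \<Rightarrow> real" where "p = (\<lambda>_. 1)"
  define sh :: "nat \<Rightarrow> real" where "sh = (\<lambda>i. if i = 0 then real (n-m+1) else 1)"
  define one :: "nat \<Rightarrow> real" where "one = (\<lambda>_. 1)"
  have eqj: "equal_jobs n p" unfolding equal_jobs_def p_def by (rule exI[of _ 1]) auto
  have psh: "pos_speeds m sh" unfolding pos_speeds_def sh_def by auto
  have nsh: "nonneg_speeds m sh" unfolding nonneg_speeds_def sh_def by auto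
  have pone: "pos_speeds m one" unfolding pos_speeds_def one_def by auto
  define f1 where "f1 = (\<lambda>j. if j < n then (if j \<le> n-m then 0 else j-(n-m)) else undefined)"
  have f1in: "f1 \<in> {..<n} \<rightarrow>\<^sub>E {..<m}" unfolding f1_def using assms by (auto split: if_splits)
  have "makespan n m p sh f1 \<le> 1"
  proof (rule makespan_le[OF assms(1)])
    fix i assume i: "i < m"
    show "(\<Sum>j\<in>{j. j < n \<and> f1 j = i}. p j) / sh i \<le> 1"
    proof (cases "i = 0")
      case True
      have "{j. j < n \<and> f1 j = i} \<subseteq> {..n-m}" using True unfolding f1_def by auto
      then have "card {j. j < n \<and> f1 j = i} \<le> n-m+1"
        using card_mono[of "{..n-m}" "{j. j < n \<and> f1 j = i}"] by simp
      then show ?thesis using True unfolding p_def sh_def by simp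
    next
      case False
      have "{j. j < n \<and> f1 j = i} \<subseteq> {n-m+i}" using False unfolding f1_def by auto
      then have "card {j. j < n \<and> f1 j = i} \<le> 1"
        using card_mono[of "{n-m+i}" "{j. j < n \<and> f1 j = i}"] by simp
      then show ?thesis using False unfolding p_def sh_def by simp
    qed
  qed
  then have opt1: "opt n m p sh \<le> 1" using opt_le[OF f1in, of p sh] by linarith
  define g where "g = (\<lambda>j. assign p sh sh (part p sh j))"
  have "alg n m part assign p sh sh \<le> 1 * opt n m p sh"
    using co eqj psh unfolding consistent_eq_def by blast
  then have "alg n m part assign p sh sh \<le> 1" using opt1 by linarith
  then have mk: "makespan n m p sh g \<le> 1" unfolding alg_def g_def .
  have gm: "\<And>j. j < n \<Longrightarrow> g j < m" using va unfolding valid_alg_def g_def by auto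
  have load: "real (card {j. j < n \<and> g j = i}) / sh i \<le> 1" if "i < m" for i
  proof -
    have "(\<Sum>j\<in>{j. j < n \<and> g j = i}. p j) / sh i \<le> 1"
      using makespan_ge[OF that, where n=n and f=g and p=p and s=sh] mk by linarith
    then show ?thesis unfolding p_def by simp
  qed
  have l0: "card {j. j < n \<and> g j = 0} \<le> n-m+1"
    using load[of 0] assms(1) unfolding sh_def by (simp add: divide_le_eq)
  have li: "card {j. j < n \<and> g j = i} \<le> 1" if "0 < i" "i < m" for i
  proof -
    have "sh i = 1" using that by (simp add: sh_def)
    then show ?thesis using load[OF that(2)] by simp
  qed
  define J0 where "J0 = {j. j < n \<and> g j = 0}"
  define R where "R = {..<n} - J0"
  have R_eq: "R = (\<Union>i\<in>{1..<m}. {j. j < n \<and> g j = i})"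
    unfolding R_def J0_def using gm by (auto simp: Suc_le_eq)
  have "card R \<le> (\<Sum>i\<in>{1..<m}. card {j. j < n \<and> g j = i})"
    unfolding R_eq by (rule card_UN_le) simp
  also have "\<dots> \<le> (\<Sum>i\<in>{1..<m}. 1)" by (intro sum_mono li) auto
  finally have cR: "card R \<le> m - 1" by simp
  have J0sub: "J0 \<subseteq> {..<n}" unfolding J0_def by auto
  have "card R = n - card J0" unfolding R_def using J0sub
    by (simp add: card_Diff_subset finite_subset)
  then have cJ0: "card J0 = n-m+1" using cR l0 assms unfolding J0_def by linarith
  have injR: "inj_on g R"
  proof (rule inj_onI)
    fix a b assume a: "a \<in> R" and b: "b \<in> R" and e: "g a = g b"
    have ga: "0 < g a" "g a < m" using a gm unfolding R_def J0_def by auto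
    define S where "S = {j. j < n \<and> g j = g a}"
    have c: "card S \<le> Suc 0" using li ga unfolding S_def by auto
    have ab: "a \<in> S" "b \<in> S"
      using a b e unfolding R_def S_def by auto
    have fS: "finite S" unfolding S_def by simp
    have "\<forall>x\<in>S. \<forall>y\<in>S. x = y" using card_le_Suc0_iff_eq[OF fS] c by blast
    then show "a = b" using ab by blast
  qed
  have injP: "inj_on (part p sh) R"
    using injR inj_on_imageI2[of "assign p sh sh" "part p sh" R] unfolding g_def o_def by blast
  have cPR: "card (part p sh ` R) = m - 1"
  proof -
    have "card (part p sh ` R) = card R" using card_image[OF injP] .
    also have "\<dots> = n - card J0" unfolding R_def using J0sub
      by (simp add: card_Diff_subset finite_subset)
    finally show ?thesis using cJ0 assms by simp
  qed
  have disj: "part p sh ` J0 \<inter> part p sh ` R = {}"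
    unfolding R_def J0_def g_def by auto
  have sub: "part p sh ` J0 \<union> part p sh ` R \<subseteq> {..<m}"
    using va unfolding valid_alg_def R_def J0_def by auto
  have "card (part p sh ` J0 \<union> part p sh ` R) \<le> m"
    using card_mono[OF _ sub] by simp
  moreover have "card (part p sh ` J0 \<union> part p sh ` R) = card (part p sh ` J0) + card (part p sh ` R)"
    using disj J0sub by (intro card_Un_disjoint) (auto intro: finite_subset simp: R_def)
  ultimately have c1: "card (part p sh ` J0) \<le> 1" using cPR assms by linarith
  have "J0 \<noteq> {}" using cJ0 by auto
  then have "part p sh ` J0 \<noteq> {}" by auto
  then obtain b0 where b0: "part p sh ` J0 = {b0}"
  proof -
    have fin: "finite (part p sh ` J0)" using J0sub finite_subset by blast
    then have "card (part p sh ` J0) \<noteq> 0" using \<open>part p sh ` J0 \<noteq> {}\<close> by simp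
    then have "card (part p sh ` J0) = 1" using c1 by linarith
    then show ?thesis using that by (metis card_1_singletonE)
  qed
  define M where "M = assign p sh one b0"
  have "b0 \<in> part p sh ` J0" using b0 by auto
  then obtain j0 where "j0 \<in> J0" "part p sh j0 = b0" by auto
  then have b0m: "b0 < m" using va unfolding valid_alg_def J0_def by auto
  then have Mm: "M < m" using va unfolding valid_alg_def M_def by auto
  define h where "h = (\<lambda>j. assign p sh one (part p sh j))"
  have "J0 \<subseteq> {j. j < n \<and> h j = M}" using b0 unfolding h_def M_def J0_def by auto
  then have "card J0 \<le> card {j. j < n \<and> h j = M}" by (intro card_mono) auto
  then have "real (n-m+1) \<le> (\<Sum>j\<in>{j. j < n \<and> h j = M}. p j) / one M"
    using cJ0 unfolding p_def one_def by simp
  also have "\<dots> \<le> makespan n m p one h" by (rule makespan_ge[OF Mm])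
  also have "\<dots> = alg n m part assign p sh one" unfolding alg_def h_def ..
  also have "\<dots> \<le> \<beta> * opt n m p one" using ro eqj nsh pone unfolding robust_eq_def by blast
  finally have key: "real (n-m+1) \<le> \<beta> * opt n m p one" .
  define k where "k = nat \<lceil>real n / real m\<rceil>"
  have kpos: "k > 0" unfolding k_def using assms by auto
  have kr: "real k = real_of_int \<lceil>real n / real m\<rceil>" unfolding k_def
    using assms by (simp add: order.strict_implies_order)
  have nkm: "n \<le> k * m"
  proof -
    have "real n / real m \<le> real k" unfolding kr by linarith
    then have "real n \<le> real k * real m" using assms by (simp add: divide_le_eq)
    then show ?thesis by (metis of_nat_le_iff of_nat_mult)
  qed
  define f2 where "f2 = (\<lambda>j. if j < n then j div k else undefined)"
  have f2in: "f2 \<in> {..<n} \<rightarrow>\<^sub>E {..<m}" unfolding f2_def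
  proof (auto split: if_splits)
    fix j assume "j < n"
    then have "j < m * k" using nkm by (simp add: mult.commute)
    then show "j div k < m" by (simp add: div_less_iff_less_mult kpos)
  qed
  have "makespan n m p one f2 \<le> real k"
  proof (rule makespan_le[OF assms(1)])
    fix i assume i: "i < m"
    have "{j. j < n \<and> f2 j = i} \<subseteq> {i*k..<i*k+k}"
    proof
      fix j assume "j \<in> {j. j < n \<and> f2 j = i}"
      then have "j div k = i" unfolding f2_def by auto
      then have e: "j = i * k + j mod k" by (metis div_mult_mod_eq)
      moreover have "j mod k < k" using kpos by simp
      ultimately show "j \<in> {i*k..<i*k+k}" unfolding atLeastLessThan_iff by linarith
    qed
    then have "card {j. j < n \<and> f2 j = i} \<le> k" using card_mono[of "{i*k..<i*k+k}" "{j. j < n \<and> f2 j = i}"] by simp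
    then show "(\<Sum>j\<in>{j. j < n \<and> f2 j = i}. p j) / one i \<le> real k"
      unfolding p_def one_def by simp
  qed
  then have optk: "opt n m p one \<le> real k" using opt_le[OF f2in, of p one] by linarith
  have opt0: "0 \<le> opt n m p one" by (rule opt_nonneg[OF assms(1)]) (auto simp: p_def one_def)
  show False
  proof (cases "\<beta> \<ge> 0")
    case True
    have "\<beta> * opt n m p one \<le> \<beta> * real k" using True optk by (simp add: mult_left_mono)
    also have "\<dots> < real (n-m+1)" using assms(3) kpos unfolding kr[symmetric]
      by (simp add: pos_less_divide_eq)
    finally show False using key by linarith
  next
    case False
    then have "\<beta> * opt n m p one \<le> 0" using opt0 by (simp add: mult_nonpos_nonneg)
    then show False using key by simp
  qed
qed

end
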